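(* There is an absolute constant $C>0$ such that the following holds. Let the mesh be uniform with width $h>0$, i.e. $x_{i+1/2}=x_{1/2}+ih$, and let $(\bar v_i)_{i\in\mathbb{Z}}$ be a bounded real sequence with $\sum_{i}|\bar v_{i+1}-\bar v_i|<\infty$. Let $v^\pm_{i+1/2}$ be the cell interface values of the second order ($k=2$) ENO reconstruction of $(\bar v_i)$. Then $$\sum_{i\in\mathbb{Z}}|\bar v_{i+1}-\bar v_i|^{3}\le C\,\Bigl(\sup_{i}|\bar v_i|\Bigr)\sum_{i\in\mathbb{Z}}(\bar v_{i+1}-\bar v_i)\bigl(v^+_{i+1/2}-v^-_{i+1/2}\bigr).$$ In particular $C$ is independent of $(\bar v_i)$ and of $h$.
   Context: Mesh: cells $I_i=[x_{i-1/2},x_{i+1/2})$. Given a real sequence $(\bar v_i)_{i\in\mathbb{Z}}$, the divided differences are $[\bar v_i]=\bar v_i$ and, for $i<j$, $[\bar v_i,\dots,\bar v_j]=\frac{[\bar v_{i+1},\dots,\bar v_j]-[\bar v_i,\dots,\bar v_{j-1}]}{x_{j+1/2}-x_{i-1/2}}$. The $k$th order ENO reconstruction: for each $i$, set $s_i^1=i$, and for $\ell=1,\dots,k-1$ set $s_i^{\ell+1}=s_i^\ell-1$ if $\bigl|[\bar v_{s_i^\ell-1},\dots,\bar v_{s_i^\ell+\ell-1}]\bigr|<\bigl|[\bar v_{s_i^\ell},\dots,\bar v_{s_i^\ell+\ell}]\bigr|$, and $s_i^{\ell+1}=s_i^\ell$ otherwise; put $s_i=s_i^k$. Then $p_i$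 is the unique polynomial of degree at most $k-1$ with $\frac{1}{|I_j|}\int_{I_j}p_i(x)\,dx=\bar v_j$ for $j=s_i,\dots,s_i+k-1$. Cell interface values: $v^-_{i+1/2}=p_i(x_{i+1/2})$, $v^+_{i+1/2}=p_{i+1}(x_{i+1/2})$. (For $k=2$: $s_i=i-1$ if $|\bar v_i-\bar v_{i-1}|<|\bar v_{i+1}-\bar v_i|$ and $s_i=i$ otherwise.) *)

theory Defs
  imports "HOL-Analysis.Analysis" "HOL-Computational_Algebra.Polynomial"
begin

text \<open>Uniform mesh: interfaces x_{i+1/2} = x0 + i*h, cells I_i = [x0+(i-1)h, x0+ih).
  Cell averages are given by v :: int => real.\<close>

definition iface :: "real \<Rightarrow> real \<Rightarrow> int \<Rightarrow> real" where
  "iface x0 h i = x0 + real_of_int i * h"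

definition cell_avg :: "real \<Rightarrow> real \<Rightarrow> real poly \<Rightarrow> int \<Rightarrow> real" where
  "cell_avg x0 h p j =
     integral {iface x0 h (j - 1) .. iface x0 h j} (poly p) / (iface x0 h j - iface x0 h (j - 1))"

definition eno2_stencil :: "(int \<Rightarrow> real) \<Rightarrow> int \<Rightarrow> int" where
  "eno2_stencil v i = (if \<bar>v i - v (i - 1)\<bar> < \<bar>v (i + 1) - v i\<bar> then i - 1 else i)"

definition eno2_poly :: "real \<Rightarrow> real \<Rightarrow> (int \<Rightarrow> real) \<Rightarrow> int \<Rightarrow> real poly" where
  "eno2_poly x0 h v i =
     (THE p. degree p \<le> 1 \<and>
        (\<forall>j \<in> {eno2_stencil v i .. eno2_stencil v i + 1}. cell_avg x0 h p j = v j))"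

definition eno2_minus :: "real \<Rightarrow> real \<Rightarrow> (int \<Rightarrow> real) \<Rightarrow> int \<Rightarrow> real" where
  "eno2_minus x0 h v i = poly (eno2_poly x0 h v i) (iface x0 h i)"

definition eno2_plus :: "real \<Rightarrow> real \<Rightarrow> (int \<Rightarrow> real) \<Rightarrow> int \<Rightarrow> real" where
  "eno2_plus x0 h v i = poly (eno2_poly x0 h v (i + 1)) (iface x0 h i)"

end

theory Submission imports Defs begin

lemma lin_integral:
  fixes a b l u :: real assumes "l \<le> u"
  shows "integral {l..u} (poly [:a,b:]) = a*(u-l) + b*(u^2-l^2)/2"
proof -
  have "((\<lambda>x. a + x*b) has_integral ((a*u + b*u^2/2) - (a*l + b*l^2/2))) {l..u}"
    apply (rule fundamental_theorem_of_calculus[OF assms])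
    apply (auto intro!: derivative_eq_intros simp: has_real_derivative_iff_has_vector_derivative[symmetric])
    done
  moreover have "poly [:a,b:] = (\<lambda>x. a + x*b)" by (simp add: fun_eq_iff)
  ultimately show ?thesis by (simp add: integral_unique field_simps power2_eq_square)
qed

lemma avg_lin:
  assumes "h > 0"
  shows "cell_avg x0 h [:a,b:] j = a + b*(x0 + (real_of_int j - 1/2)*h)"
proof -
  have le: "iface x0 h (j-1) \<le> iface x0 h j" using assms by (simp add: iface_def)
  show ?thesis using assms unfolding cell_avg_def lin_integral[OF le]
    by (simp add: iface_def field_simps power2_eq_square)
qed

lemma deg1: "degree (q::real poly) \<le> 1 \<Longrightarrow> q = [:coeff q 0, coeff q 1:]"
  by (rule poly_eqI) (auto simp: coeff_pCons split: nat.splits intro!: coeff_eq_0)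

lemma eno2_poly_eq:
  fixes v :: "int \<Rightarrow> real" and i :: int
  assumes h: "h > 0"
  defines "s \<equiv> eno2_stencil v i"
  shows "eno2_poly x0 h v i = [: v s - (v(s+1)-v s)/h*(x0+(real_of_int s - 1/2)*h), (v(s+1)-v s)/h :]"
proof -
  let ?P = "[: v s - (v(s+1)-v s)/h*(x0+(real_of_int s - 1/2)*h), (v(s+1)-v s)/h :]"
  have ok: "degree ?P \<le> 1 \<and> (\<forall>j \<in> {s .. s + 1}. cell_avg x0 h ?P j = v j)"
  proof (intro conjI ballI)
    show "degree ?P \<le> 1" by simp
    fix j assume "j \<in> {s..s+1}"
    then have "j = s \<or> j = s + 1" by auto
    then show "cell_avg x0 h ?P j = v j" using h
      by (auto simp: avg_lin field_simps)
  qed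
  have uniq: "q = ?P" if q: "degree q \<le> 1 \<and> (\<forall>j \<in> {s .. s + 1}. cell_avg x0 h q j = v j)" for q
  proof -
    have qe: "q = [:coeff q 0, coeff q 1:]" using q deg1 by blast
    define a where "a = coeff q 0"
    define b where "b = coeff q 1"
    have e1: "a + b*(x0 + (real_of_int s - 1/2)*h) = v s"
      using q avg_lin[OF h, of x0 a b s] qe unfolding a_def b_def by (metis atLeastAtMost_iff le_add_same_cancel1 order_refl zero_le_one)
    have e2: "a + b*(x0 + (real_of_int (s+1) - 1/2)*h) = v (s+1)"
      using q avg_lin[OF h, of x0 a b "s+1"] qe unfolding a_def b_def by (metis atLeastAtMost_iff le_add_same_cancel1 order_refl zero_le_one)
    have bb: "b = (v(s+1)-v s)/h" using e1 e2 h by (simp add: field_simps)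
    have aa: "a = v s - (v(s+1)-v s)/h*(x0+(real_of_int s - 1/2)*h)" using e1 bb by simp
    show ?thesis using qe aa bb a_def b_def by simp
  qed
  show ?thesis unfolding eno2_poly_def s_def[symmetric]
    using ok uniq by (rule the_equality)
qed

lemma eno2_val:
  assumes h: "h > 0"
  shows "poly (eno2_poly x0 h v i) x = v (eno2_stencil v i) + (v(eno2_stencil v i+1)-v (eno2_stencil v i))*(x - (x0 + (real_of_int (eno2_stencil v i) - 1/2)*h))/h"
  using h by (simp add: eno2_poly_eq field_simps)

definition sig :: "(int \<Rightarrow> real) \<Rightarrow> int \<Rightarrow> real" where
  "sig v i = (if \<bar>v i - v (i - 1)\<bar> < \<bar>v (i + 1) - v i\<bar> then v i - v (i - 1) else v (i + 1) - v i)"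

lemma eno2_minus_eq: "h > 0 \<Longrightarrow> eno2_minus x0 h v i = v i + sig v i / 2"
  unfolding eno2_minus_def eno2_val sig_def eno2_stencil_def iface_def
  by (auto simp: field_simps)

lemma eno2_plus_eq: "h > 0 \<Longrightarrow> eno2_plus x0 h v i = v (i+1) - sig v (i+1) / 2"
  unfolding eno2_plus_def eno2_val sig_def eno2_stencil_def iface_def
  by (auto simp: field_simps)

definition dd :: "(int \<Rightarrow> real) \<Rightarrow> int \<Rightarrow> real" where "dd v i = v (i+1) - v i"
definition TT :: "(int \<Rightarrow> real) \<Rightarrow> int \<Rightarrow> real" where
  "TT v i = dd v i * (dd v i - (sig v i + sig v (i+1))/2)"
definition gg :: "real \<Rightarrow> real" where "gg x = \<bar>x\<bar> * x"

lemma sig_alt: "sig v i = (if \<bar>dd v (i-1)\<bar> < \<bar>dd v i\<bar> then dd v (i-1) else dd v i)"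
  by (simp add: sig_def dd_def)

lemma prod_le: "\<bar>x\<bar> \<le> \<bar>y\<bar> \<Longrightarrow> x * y \<le> y * (y::real)"
proof -
  assume a: "\<bar>x\<bar> \<le> \<bar>y\<bar>"
  have "x*y \<le> \<bar>x\<bar>*\<bar>y\<bar>" by (metis abs_ge_self abs_mult)
  also have "\<dots> \<le> \<bar>y\<bar>*\<bar>y\<bar>" by (rule mult_right_mono[OF a]) simp
  also have "\<dots> = y*y" by (simp add: abs_mult_self_eq)
  finally show ?thesis .
qed

lemma H1_nn: "0 \<le> dd v i * (dd v i - sig v i)"
proof -
  have aux: "\<bar>x\<bar> < \<bar>y\<bar> \<Longrightarrow> 0 \<le> y * (y - x)" for x y :: real
    using prod_le[of x y] by (simp add: algebra_simps)
  show ?thesis unfolding sig_alt using aux by auto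
qed

lemma H2_nn: "0 \<le> dd v i * (dd v i - sig v (i+1))"
proof -
  have aux: "\<not> \<bar>x\<bar> < \<bar>y\<bar> \<Longrightarrow> 0 \<le> x * (x - y)" for x y :: real
    using prod_le[of y x] by (simp add: algebra_simps)
  show ?thesis unfolding sig_alt using aux by auto
qed

lemma TT_nn: "0 \<le> TT v i"
  using H1_nn[of v i] H2_nn[of v i] unfolding TT_def by (simp add: field_simps)

lemma TT_split: "2 * TT v i = dd v i * (dd v i - sig v i) + dd v i * (dd v i - sig v (i+1))"
  unfolding TT_def by (simp add: field_simps)

lemma gg_aux: "\<bar>gg y - gg x\<bar> \<le> (y-x)^2 + \<bar>y^2 - x^2\<bar>"
proof (cases "x \<ge> 0")
  case True
  show ?thesis
  proof (cases "y \<ge> 0")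
    case True
    then show ?thesis using \<open>x \<ge> 0\<close> by (simp add: gg_def power2_eq_square)
  next
    case False
    have "0 \<le> x * (-y)" using \<open>x\<ge>0\<close> False by (intro mult_nonneg_nonneg) auto
    then show ?thesis using \<open>x \<ge> 0\<close> False by (simp add: gg_def power2_eq_square algebra_simps)
  qed
next
  case False
  show ?thesis
  proof (cases "y \<ge> 0")
    case True
    have "0 \<le> (-x) * y" using \<open>\<not> x\<ge>0\<close> True by (intro mult_nonneg_nonneg) auto
    then show ?thesis using False True by (simp add: gg_def power2_eq_square algebra_simps)
  next
    case False
    then show ?thesis using \<open>\<not> x \<ge> 0\<close> by (simp add: gg_def power2_eq_square abs_minus_commute)
  qed
qed

lemma L2: "\<bar>gg (dd v (i+1)) - gg (dd v i)\<bar> \<le> 2 * (dd v i * (dd v i - sig v (i+1)) + dd v (i+1) * (dd v (i+1) - sig v (i+1)))"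
proof -
  have a1: "\<bar>gg y - gg x\<bar> \<le> 2 * (y*(y-x))" if "\<bar>x\<bar> < \<bar>y\<bar>" for x y :: real
  proof -
    have "x^2 \<le> y^2" using that abs_le_square_iff by (metis less_le_not_le nle_le)
    then have "\<bar>y^2 - x^2\<bar> = y^2 - x^2" by simp
    then show ?thesis using gg_aux[of y x] by (simp add: power2_eq_square algebra_simps)
  qed
  have a2: "\<bar>gg y - gg x\<bar> \<le> 2 * (x*(x-y))" if "\<not> \<bar>x\<bar> < \<bar>y\<bar>" for x y :: real
  proof -
    have "y^2 \<le> x^2" using that abs_le_square_iff by (metis less_le_not_le nle_le)
    then have "\<bar>y^2 - x^2\<bar> = x^2 - y^2" by simp
    then show ?thesis using gg_aux[of y x] by (simp add: power2_eq_square algebra_simps)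
  qed
  show ?thesis unfolding sig_alt[of v "i+1"] using a1 a2 by auto
qed

lemma sbp:
  "(\<Sum>k\<le>N. dd v (m + int k) * gg (dd v (m + int k))) =
     v (m + int N + 1) * gg (dd v (m + int N)) - v m * gg (dd v m)
     - (\<Sum>k<N. v (m + int k + 1) * (gg (dd v (m + int k + 1)) - gg (dd v (m + int k))))"
proof (induction N)
  case 0
  then show ?case by (simp add: dd_def algebra_simps)
next
  case (Suc N)
  have e: "m + int (Suc N) = m + int N + 1" by simp
  show ?case using Suc by (simp add: e dd_def algebra_simps)
qed

lemma Hsum:
  fixes H1 H2 :: "nat \<Rightarrow> real"
  shows "(\<Sum>k<N. H2 k + H1 (Suc k)) + H1 0 + H2 N = (\<Sum>k\<le>N. H1 k + H2 k)"
  by (induction N) (simp_all add: algebra_simps)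

lemma cube_gg: "\<bar>x\<bar>^3 = x * gg x"
  by (simp add: gg_def power3_eq_cube abs_mult_self_eq algebra_simps)

lemma block:
  assumes vM: "\<And>i. \<bar>v i\<bar> \<le> M"
  shows "(\<Sum>k\<le>N. \<bar>dd v (m + int k)\<bar>^3)
    \<le> M * ((dd v (m + int N))^2 + (dd v m)^2) + 4 * M * (\<Sum>k\<le>N. TT v (m + int k))"
proof -
  define H1 where "H1 k = dd v (m + int k) * (dd v (m + int k) - sig v (m + int k))" for k
  define H2 where "H2 k = dd v (m + int k) * (dd v (m + int k) - sig v (m + int k + 1))" for k
  define G where "G k = gg (dd v (m + int k))" for k
  have M0: "0 \<le> M" using vM[of 0] by simp
  have H1nn: "0 \<le> H1 k" for k unfolding H1_def by (rule H1_nn)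
  have H2nn: "0 \<le> H2 k" for k unfolding H2_def by (rule H2_nn)
  have dG: "\<bar>G (Suc k) - G k\<bar> \<le> 2 * (H2 k + H1 (Suc k))" for k
  proof -
    have e: "m + int (Suc k) = m + int k + 1" by simp
    show ?thesis unfolding G_def H1_def H2_def e using L2[of v "m + int k"] by simp
  qed
  have TTe: "TT v (m + int k) = (H1 k + H2 k) / 2" for k
    using TT_split[of v "m + int k"] unfolding H1_def H2_def by (simp add: add.assoc)
  have "(\<Sum>k\<le>N. \<bar>dd v (m + int k)\<bar>^3) = (\<Sum>k\<le>N. dd v (m + int k) * gg (dd v (m + int k)))"
    by (simp add: cube_gg)
  also have "\<dots> = v (m + int N + 1) * G N - v m * G 0
     - (\<Sum>k<N. v (m + int k + 1) * (G (Suc k) - G k))"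
    unfolding sbp G_def by (simp add: ac_simps)
  also have "\<dots> \<le> M * (dd v (m + int N))^2 + M * (dd v m)^2 + M * (\<Sum>k<N. \<bar>G (Suc k) - G k\<bar>)"
  proof -
    have gabs: "\<bar>gg x\<bar> = x^2" for x by (simp add: gg_def abs_mult power2_eq_square abs_mult_self_eq)
    have b1: "v (m + int N + 1) * G N \<le> M * (dd v (m + int N))^2"
    proof -
      have "v (m + int N + 1) * G N \<le> \<bar>v (m + int N + 1)\<bar> * \<bar>G N\<bar>" by (metis abs_ge_self abs_mult)
      also have "\<dots> \<le> M * \<bar>G N\<bar>" by (rule mult_right_mono[OF vM]) simp
      finally show ?thesis by (simp add: G_def gabs)
    qed
    have b2: "- (v m * G 0) \<le> M * (dd v m)^2"
    proof -
      have "- (v m * G 0) \<le> \<bar>v m\<bar> * \<bar>G 0\<bar>" by (metis abs_ge_minus_self abs_mult)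
      also have "\<dots> \<le> M * \<bar>G 0\<bar>" by (rule mult_right_mono[OF vM]) simp
      finally show ?thesis by (simp add: G_def gabs)
    qed
    have b3: "- (\<Sum>k<N. v (m + int k + 1) * (G (Suc k) - G k)) \<le> M * (\<Sum>k<N. \<bar>G (Suc k) - G k\<bar>)"
    proof -
      have "- (\<Sum>k<N. v (m + int k + 1) * (G (Suc k) - G k)) = (\<Sum>k<N. - (v (m + int k + 1) * (G (Suc k) - G k)))"
        by (simp add: sum_negf)
      also have "\<dots> \<le> (\<Sum>k<N. M * \<bar>G (Suc k) - G k\<bar>)"
      proof (rule sum_mono)
        fix k
        have "- (v (m + int k + 1) * (G (Suc k) - G k)) \<le> \<bar>v (m + int k + 1)\<bar> * \<bar>G (Suc k) - G k\<bar>"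
          by (metis abs_ge_minus_self abs_mult)
        also have "\<dots> \<le> M * \<bar>G (Suc k) - G k\<bar>" by (rule mult_right_mono[OF vM]) simp
        finally show "- (v (m + int k + 1) * (G (Suc k) - G k)) \<le> M * \<bar>G (Suc k) - G k\<bar>" .
      qed
      also have "\<dots> = M * (\<Sum>k<N. \<bar>G (Suc k) - G k\<bar>)" by (simp add: sum_distrib_left)
      finally show ?thesis .
    qed
    show ?thesis using b1 b2 b3 by linarith
  qed
  also have "\<dots> \<le> M * (dd v (m + int N))^2 + M * (dd v m)^2 + 4 * M * (\<Sum>k\<le>N. TT v (m + int k))"
  proof -
    have "(\<Sum>k<N. \<bar>G (Suc k) - G k\<bar>) \<le> (\<Sum>k<N. 2 * (H2 k + H1 (Suc k)))"
      by (rule sum_mono) (rule dG)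
    also have "\<dots> = 2 * (\<Sum>k<N. H2 k + H1 (Suc k))" by (simp add: sum_distrib_left)
    also have "\<dots> \<le> 2 * (\<Sum>k\<le>N. H1 k + H2 k)"
      using Hsum[of H2 H1 N] H1nn[of 0] H2nn[of N] by linarith
    also have "\<dots> = 4 * (\<Sum>k\<le>N. TT v (m + int k))"
      by (simp add: TTe sum_divide_distrib[symmetric])
    finally have "(\<Sum>k<N. \<bar>G (Suc k) - G k\<bar>) \<le> 4 * (\<Sum>k\<le>N. TT v (m + int k))" .
    then have "M * (\<Sum>k<N. \<bar>G (Suc k) - G k\<bar>) \<le> M * (4 * (\<Sum>k\<le>N. TT v (m + int k)))"
      by (rule mult_left_mono[OF _ M0])
    then show ?thesis by simp
  qed
  finally show ?thesis by (simp add: algebra_simps)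
qed

lemma large_finite:
  fixes f :: "'a \<Rightarrow> real"
  assumes summ: "f summable_on UNIV" and nn: "\<And>x. 0 \<le> f x" and d: "0 < \<delta>"
  shows "finite {x. \<delta> \<le> f x}"
proof (rule ccontr)
  assume inf: "infinite {x. \<delta> \<le> f x}"
  obtain n where n: "infsum f UNIV < of_nat n * \<delta>" using ex_less_of_nat_mult[OF d] by blast
  obtain B where B: "finite B" "card B = n" "B \<subseteq> {x. \<delta> \<le> f x}"
    using infinite_arbitrarily_large[OF inf] by blast
  have "of_nat (card B) * \<delta> \<le> sum f B" by (rule sum_bounded_below) (use B in auto)
  also have "\<dots> \<le> infsum f UNIV" by (rule finite_sum_le_infsum[OF summ B(1)]) (auto simp: nn)
  finally show False using n B(2) by simp
qed

lemma sig_le1: "\<bar>sig v i\<bar> \<le> \<bar>dd v i\<bar>"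
  unfolding sig_alt by auto

lemma sig_le2: "\<bar>sig v (i+1)\<bar> \<le> \<bar>dd v i\<bar>"
  unfolding sig_alt[of v "i+1"] by auto

lemma TT_le: "TT v i \<le> 2 * \<bar>dd v i\<bar> * \<bar>dd v i\<bar>"
proof -
  have "TT v i \<le> \<bar>dd v i\<bar> * \<bar>dd v i - (sig v i + sig v (i+1))/2\<bar>"
    unfolding TT_def by (metis abs_ge_self abs_mult)
  also have "\<dots> \<le> \<bar>dd v i\<bar> * (2 * \<bar>dd v i\<bar>)"
  proof (rule mult_left_mono)
    have aux: "\<bar>a\<bar> \<le> \<bar>d\<bar> \<Longrightarrow> \<bar>b\<bar> \<le> \<bar>d\<bar> \<Longrightarrow> \<bar>d - (a+b)/2\<bar> \<le> 2 * \<bar>d\<bar>" for a b d :: real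
    proof -
      assume 1: "\<bar>a\<bar> \<le> \<bar>d\<bar>" and 2: "\<bar>b\<bar> \<le> \<bar>d\<bar>"
      have "\<bar>d - (a+b)/2\<bar> \<le> \<bar>d\<bar> + \<bar>(a+b)/2\<bar>" by (rule abs_triangle_ineq4)
      moreover have "\<bar>(a+b)/2\<bar> = \<bar>a+b\<bar>/2" by simp
      moreover have "\<bar>a+b\<bar> \<le> \<bar>a\<bar> + \<bar>b\<bar>" by (rule abs_triangle_ineq)
      ultimately show ?thesis using 1 2 by linarith
    qed
    show "\<bar>dd v i - (sig v i + sig v (i+1))/2\<bar> \<le> 2 * \<bar>dd v i\<bar>"
      using sig_le1[of v i] sig_le2[of v i] by (rule aux)
  qed simp
  finally show ?thesis by simp
qed

lemma sq_small: "\<bar>x\<bar> < sqrt \<eta> \<Longrightarrow> x^2 < (\<eta>::real)"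
  by (metis real_sqrt_abs real_sqrt_less_iff)

theorem mainTheorem3:
  shows "\<exists>C::real. C > 0 \<and>
    (\<forall>(x0::real) (h::real) (v::int \<Rightarrow> real).
       h > 0 \<longrightarrow> bdd_above (range (\<lambda>i. \<bar>v i\<bar>)) \<longrightarrow>
       (\<lambda>i. \<bar>v (i + 1) - v i\<bar>) summable_on UNIV \<longrightarrow>
       (\<Sum>\<^sub>\<infinity>i. \<bar>v (i + 1) - v i\<bar> ^ 3)
         \<le> C * (SUP i. \<bar>v i\<bar>) *
           (\<Sum>\<^sub>\<infinity>i. (v (i + 1) - v i) * (eno2_plus x0 h v i - eno2_minus x0 h v i)))"
proof (intro exI[of _ 4] conjI allI impI)
  show "(0::real) < 4" by simp
  fix x0 h :: real and v :: "int \<Rightarrow> real"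
  assume h: "h > 0" and bdd: "bdd_above (range (\<lambda>i. \<bar>v i\<bar>))"
    and summ0: "(\<lambda>i. \<bar>v (i + 1) - v i\<bar>) summable_on UNIV"
  define M where "M = (SUP i. \<bar>v i\<bar>)"
  have vM: "\<bar>v i\<bar> \<le> M" for i unfolding M_def by (rule cSUP_upper[OF UNIV_I bdd])
  have M0: "0 \<le> M" using vM[of 0] by simp
  have ddM: "\<bar>dd v i\<bar> \<le> 2 * M" for i using vM[of i] vM[of "i+1"] by (simp add: dd_def)
  have Teq: "(\<lambda>i. (v (i + 1) - v i) * (eno2_plus x0 h v i - eno2_minus x0 h v i)) = TT v"
    by (rule ext) (simp add: eno2_plus_eq[OF h] eno2_minus_eq[OF h] TT_def dd_def field_simps)
  have summ: "(\<lambda>i. \<bar>dd v i\<bar>) summable_on UNIV" using summ0 by (simp add: dd_def)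
  have Tsum: "TT v summable_on UNIV"
  proof (rule summable_on_comparison_test[OF summable_on_cmult_right[OF summ, of "4*M"]])
    fix i
    show "0 \<le> TT v i" by (rule TT_nn)
    have "TT v i \<le> 2 * \<bar>dd v i\<bar> * \<bar>dd v i\<bar>" by (rule TT_le)
    also have "\<dots> \<le> 2 * (2*M) * \<bar>dd v i\<bar>" using ddM[of i] by (intro mult_right_mono) auto
    finally show "TT v i \<le> 4 * M * \<bar>dd v i\<bar>" by simp
  qed
  define S where "S = infsum (TT v) UNIV"
  have Sge: "finite B \<Longrightarrow> sum (TT v) B \<le> S" for B
    unfolding S_def by (rule finite_sum_le_infsum[OF Tsum]) (auto simp: TT_nn)
  have S0: "0 \<le> S" unfolding S_def by (rule infsum_nonneg) (simp add: TT_nn)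
  have key: "sum (\<lambda>i. \<bar>dd v i\<bar>^3) F \<le> 4 * M * S" if F: "finite F" for F
  proof (rule field_le_epsilon)
    fix e :: real assume e: "0 < e"
    define \<eta> where "\<eta> = e / (2*M+1)"
    have eta: "0 < \<eta>" unfolding \<eta>_def using e M0 by simp
    define B where "B = {i. sqrt \<eta> \<le> \<bar>dd v i\<bar>}"
    have Bfin: "finite B" unfolding B_def
      by (rule large_finite[OF summ]) (use eta in auto)
    define K where "K = insert 0 (F \<union> B)"
    have Kfin: "finite K" using F Bfin by (simp add: K_def)
    define m where "m = Min K - 1"
    define n where "n = Max K + 1"
    have mK: "\<And>i. i \<in> K \<Longrightarrow> m < i" using Min_le[OF Kfin] unfolding m_def by force
    have nK: "\<And>i. i \<in> K \<Longrightarrow> i < n" using Max_ge[OF Kfin] unfolding n_def by force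
    have mn: "m \<le> n" using mK[of 0] nK[of 0] by (simp add: K_def)
    have mB: "m \<notin> B" using mK by (auto simp: K_def)
    have nB: "n \<notin> B" using nK by (auto simp: K_def)
    have dm: "(dd v m)^2 < \<eta>" using mB by (intro sq_small) (simp add: B_def)
    have dn: "(dd v n)^2 < \<eta>" using nB by (intro sq_small) (simp add: B_def)
    define N where "N = nat (n - m)"
    have nN: "m + int N = n" using mn by (simp add: N_def)
    have Fsub: "F \<subseteq> (\<lambda>k. m + int k) ` {..N}"
    proof
      fix i assume i: "i \<in> F"
      then have "m < i" "i < n" using mK nK by (auto simp: K_def)
      then show "i \<in> (\<lambda>k. m + int k) ` {..N}"
        by (intro image_eqI[of _ _ "nat (i - m)"]) (auto simp: N_def)
    qed
    have inj: "inj_on (\<lambda>k. m + int k) {..N}" by (auto simp: inj_on_def)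
    have "sum (\<lambda>i. \<bar>dd v i\<bar>^3) F \<le> sum (\<lambda>i. \<bar>dd v i\<bar>^3) ((\<lambda>k. m + int k) ` {..N})"
      by (rule sum_mono2[OF _ Fsub]) auto
    also have "\<dots> = (\<Sum>k\<le>N. \<bar>dd v (m + int k)\<bar>^3)"
      by (simp add: sum.reindex[OF inj])
    also have "\<dots> \<le> M * ((dd v (m + int N))^2 + (dd v m)^2) + 4 * M * (\<Sum>k\<le>N. TT v (m + int k))"
      by (rule block) (rule vM)
    also have "(\<Sum>k\<le>N. TT v (m + int k)) = sum (TT v) ((\<lambda>k. m + int k) ` {..N})"
      by (simp add: sum.reindex[OF inj])
    also have "\<dots> \<le> S" by (rule Sge) simp
    also have "M * ((dd v (m + int N))^2 + (dd v m)^2) \<le> M * (2 * \<eta>)"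
      using dm dn nN M0 by (intro mult_left_mono) auto
    also have "M * (2 * \<eta>) \<le> e"
    proof -
      have "M * (2 * \<eta>) = e * (2*M / (2*M+1))" unfolding \<eta>_def using M0 by (simp add: field_simps)
      also have "\<dots> \<le> e * 1" using e M0 by (intro mult_left_mono) auto
      finally show ?thesis by simp
    qed
    finally show "sum (\<lambda>i. \<bar>dd v i\<bar>^3) F \<le> 4 * M * S + e" using M0 by (simp add: mult_left_mono add.commute)
  qed
  have main: "infsum (\<lambda>i. \<bar>dd v i\<bar>^3) UNIV \<le> 4 * M * S"
  proof (cases "(\<lambda>i. \<bar>dd v i\<bar>^3) summable_on UNIV")
    case True
    then show ?thesis by (rule infsum_le_finite_sums) (rule key)
  next
    case False
    then show ?thesis using M0 S0 by (simp add: infsum_not_exists)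
  qed
  show "(\<Sum>\<^sub>\<infinity>i. \<bar>v (i + 1) - v i\<bar> ^ 3)
         \<le> 4 * (SUP i. \<bar>v i\<bar>) *
           (\<Sum>\<^sub>\<infinity>i. (v (i + 1) - v i) * (eno2_plus x0 h v i - eno2_minus x0 h v i))"
    using main unfolding Teq S_def M_def by (simp add: dd_def)
qed

end
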